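(* For every formula $A$ of $\mathbf{L_1}$: $\vdash_{\mathbf{HL_1}}A$ if and only if $\dashv_H A$ (i.e. $A$ is a theorem of $\mathbf{HAR}$).
   Context: Formulas of $\mathbf{L_1}$: built from atomic formulas $\epsilon ab$ ($a,b$ name variables, possibly equal) with primitive connectives $\vee,\sim$; $\wedge,\supset,\equiv$ defined as usual. Disjunctions may be associated in any way. $\vdash_H A$: $A$ belongs to the smallest set containing all instances of classical propositional tautologies and all formulas $\epsilon ab\supset\epsilon aa$, $(\epsilon ab\wedge\epsilon bc)\supset\epsilon ac$, $(\epsilon ab\wedge\epsilon bb)\supset\epsilon ba$, closed under modus ponens. Positive/negative parts (occurrences): $A$ is a positive part of $A$; if $B\vee C$ is a positive part then $B,C$ are positive parts; if $\sim B$ is a positive part then $B$ is a negative part; if $\sim B$ is a negative part then $B$ is a positive part. $F[B_+,B_-]$ denotes a formula in which some $B$ has one occurrence as positive part and another non-overlapping occurrence as negative part. Hintikka formula: a formula $H$ such that (1) $H$ is not of the form $F[B_+,B_-]$; (2) if $B\vee C$ is a negative part of $H$ then $B$ or $C$ is; (3) if $\epsilon ab$ is a negative part then so is $\epsilon aa$; (4) if $\epsilon ab,\epsilon bc$ are negative parts then so is $\epsilon ac$; (5) if $\epsilon ab,\epsilon bb$ are negative parts then so is $\epsilon ba$. $\mathbf{HAR}$: fix a name variable $a_0$; $\dashv_H$ is the smallest set such that $\dashv_H\epsilon a_0a_0$; $\dashv_H\sim\epsilon a_0a_0$; if $\vdash_H A\supset B$ and $\dashv_H B$ then $\dashv_H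 A$; if $\dashv_H A$ and $A$ is obtained from $B$ by uniform substitution of name variables for name variables then $\dashv_H B$; if $A$ is a Hintikka formula that is a disjunction of atomic or negated atomic formulas, $\dashv_H A$, and $\epsilon ab$ is not a negative part of $A$, then $\dashv_H A\vee\epsilon ab$. $\mathbf{HL_1}$: $\vdash_{\mathbf{HL_1}}$ is the smallest set of formulas containing every Hintikka formula and such that $\vdash_H A\supset B$ and $\vdash_{\mathbf{HL_1}}B$ imply $\vdash_{\mathbf{HL_1}}A$. *)

theory Defs
  imports Main
begin

type_synonym name = nat

datatype fm = Eps name name | Or fm fm | Neg fm

definition And :: "fm \<Rightarrow> fm \<Rightarrow> fm" where
  "And A B = Neg (Or (Neg A) (Neg B))"
definition Imp :: "fm \<Rightarrow> fm \<Rightarrow> fm" where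
  "Imp A B = Or (Neg A) B"
definition Iff :: "fm \<Rightarrow> fm \<Rightarrow> fm" where
  "Iff A B = And (Imp A B) (Imp B A)"

datatype pform = PVar nat | POr pform pform | PNeg pform

fun peval :: "(nat \<Rightarrow> bool) \<Rightarrow> pform \<Rightarrow> bool" where
  "peval v (PVar n) = v n"
| "peval v (POr p q) = (peval v p \<or> peval v q)"
| "peval v (PNeg p) = (\<not> peval v p)"

definition ptaut :: "pform \<Rightarrow> bool" where
  "ptaut p \<longleftrightarrow> (\<forall>v. peval v p)"

fun pinst :: "(nat \<Rightarrow> fm) \<Rightarrow> pform \<Rightarrow> fm" where
  "pinst \<sigma> (PVar n) = \<sigma> n"
| "pinst \<sigma> (POr p q) = Or (pinst \<sigma> p) (pinst \<sigma> q)"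
| "pinst \<sigma> (PNeg p) = Neg (pinst \<sigma> p)"

definition taut_instance :: "fm \<Rightarrow> bool" where
  "taut_instance A \<longleftrightarrow> (\<exists>p \<sigma>. ptaut p \<and> pinst \<sigma> p = A)"

inductive provH :: "fm \<Rightarrow> bool" where
  taut: "taut_instance A \<Longrightarrow> provH A"
| ax1: "provH (Imp (Eps a b) (Eps a a))"
| ax2: "provH (Imp (And (Eps a b) (Eps b c)) (Eps a c))"
| ax3: "provH (Imp (And (Eps a b) (Eps b b)) (Eps b a))"
| mp: "provH (Imp A B) \<Longrightarrow> provH A \<Longrightarrow> provH B"

text \<open>Positive / negative parts, as occurrences identified by positions (paths).
  Position p@[0] is the left (or only) immediate subformula, p@[1] the right one.\<close>
inductive pos_part :: "fm \<Rightarrow> nat list \<Rightarrow> fm \<Rightarrow> bool"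
  and neg_part :: "fm \<Rightarrow> nat list \<Rightarrow> fm \<Rightarrow> bool" for A :: fm where
  pos_self: "pos_part A [] A"
| pos_orL: "pos_part A p (Or B C) \<Longrightarrow> pos_part A (p @ [0]) B"
| pos_orR: "pos_part A p (Or B C) \<Longrightarrow> pos_part A (p @ [1]) C"
| pos_neg: "pos_part A p (Neg B) \<Longrightarrow> neg_part A (p @ [0]) B"
| neg_neg: "neg_part A p (Neg B) \<Longrightarrow> pos_part A (p @ [0]) B"

definition is_neg_part :: "fm \<Rightarrow> fm \<Rightarrow> bool" where
  "is_neg_part A B \<longleftrightarrow> (\<exists>p. neg_part A p B)"

text \<open>A is of the form F[B+,B-]: some B has a positive occurrence and a non-overlapping
  negative occurrence (occurrences overlap iff one position is a prefix of the other).\<close>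
definition has_pos_neg :: "fm \<Rightarrow> bool" where
  "has_pos_neg A \<longleftrightarrow> (\<exists>B p q. pos_part A p B \<and> neg_part A q B
      \<and> \<not> (\<exists>r. q = p @ r) \<and> \<not> (\<exists>r. p = q @ r))"

definition hintikka :: "fm \<Rightarrow> bool" where
  "hintikka H \<longleftrightarrow>
     \<not> has_pos_neg H
   \<and> (\<forall>B C. is_neg_part H (Or B C) \<longrightarrow> is_neg_part H B \<or> is_neg_part H C)
   \<and> (\<forall>a b. is_neg_part H (Eps a b) \<longrightarrow> is_neg_part H (Eps a a))
   \<and> (\<forall>a b c. is_neg_part H (Eps a b) \<and> is_neg_part H (Eps b c) \<longrightarrow> is_neg_part H (Eps a c))
   \<and> (\<forall>a b. is_neg_part H (Eps a b) \<and> is_neg_part H (Eps b b) \<longrightarrow> is_neg_part H (Eps b a))"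

inductive lit_disj :: "fm \<Rightarrow> bool" where
  "lit_disj (Eps a b)"
| "lit_disj (Neg (Eps a b))"
| "lit_disj A \<Longrightarrow> lit_disj B \<Longrightarrow> lit_disj (Or A B)"

fun nsubst :: "(name \<Rightarrow> name) \<Rightarrow> fm \<Rightarrow> fm" where
  "nsubst s (Eps a b) = Eps (s a) (s b)"
| "nsubst s (Or A B) = Or (nsubst s A) (nsubst s B)"
| "nsubst s (Neg A) = Neg (nsubst s A)"

inductive refH :: "name \<Rightarrow> fm \<Rightarrow> bool" for a0 :: name where
  r_atom: "refH a0 (Eps a0 a0)"
| r_negatom: "refH a0 (Neg (Eps a0 a0))"
| r_mp: "provH (Imp A B) \<Longrightarrow> refH a0 B \<Longrightarrow> refH a0 A"
| r_subst: "refH a0 A \<Longrightarrow> A = nsubst s B \<Longrightarrow> refH a0 B"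
| r_ext: "hintikka A \<Longrightarrow> lit_disj A \<Longrightarrow> refH a0 A \<Longrightarrow> \<not> is_neg_part A (Eps a b)
           \<Longrightarrow> refH a0 (Or A (Eps a b))"

inductive provHL1 :: "fm \<Rightarrow> bool" where
  hl_hint: "hintikka A \<Longrightarrow> provHL1 A"
| hl_mp: "provH (Imp A B) \<Longrightarrow> provHL1 B \<Longrightarrow> provHL1 A"

end

theory Submission
  imports Defs "HOL-Library.Nat_Bijection"
begin


fun pe :: "(name \<Rightarrow> name \<Rightarrow> bool) \<Rightarrow> fm \<Rightarrow> bool" where
  "pe w (Eps a b) = w a b"
| "pe w (Or A B) = (pe w A \<or> pe w B)"
| "pe w (Neg A) = (\<not> pe w A)"

lemma pe_defs[simp]: "pe w (And A B) = (pe w A \<and> pe w B)" "pe w (Imp A B) = (pe w A \<longrightarrow> pe w B)"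
  by (simp_all add: And_def Imp_def)

fun pabs :: "fm \<Rightarrow> pform" where
  "pabs (Eps a b) = PVar (prod_encode (a,b))"
| "pabs (Or A B) = POr (pabs A) (pabs B)"
| "pabs (Neg A) = PNeg (pabs A)"

definition sig :: "nat \<Rightarrow> fm" where "sig n = (case prod_decode n of (a,b) \<Rightarrow> Eps a b)"

lemma pinst_pabs: "pinst sig (pabs F) = F" by (induct F) (simp_all add: sig_def)
lemma peval_pabs: "peval v (pabs F) = pe (\<lambda>a b. v (prod_encode (a,b))) F" by (induct F) simp_all

lemma taut_prov: assumes "\<And>w. pe w F" shows "provH F"
proof -
  have "taut_instance F" unfolding taut_instance_def ptaut_def
    using pinst_pabs peval_pabs assms by metis
  thus ?thesis by (rule provH.taut)
qed

lemma pe_foldr: "pe w (foldr Imp Gs F) = ((\<forall>G\<in>set Gs. pe w G) \<longrightarrow> pe w F)"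
  by (induct Gs) auto

lemma prov_foldr: "provH (foldr Imp Gs F) \<Longrightarrow> \<forall>G\<in>set Gs. provH G \<Longrightarrow> provH F"
  by (induct Gs arbitrary: F) (auto intro: provH.mp)

lemma semconseq: "\<forall>G\<in>set Gs. provH G \<Longrightarrow> (\<And>w. \<forall>G\<in>set Gs. pe w G \<Longrightarrow> pe w F) \<Longrightarrow> provH F"
  by (rule prov_foldr[of Gs]) (auto intro!: taut_prov simp: pe_foldr)

definition T :: "(name \<Rightarrow> 'o set) \<Rightarrow> name \<Rightarrow> name \<Rightarrow> bool" where
  "T D a b \<longleftrightarrow> (\<exists>x. D a = {x} \<and> x \<in> D b)"

lemma pe_pinst: "pe w (pinst \<sigma> p) = peval (\<lambda>n. pe w (\<sigma> n)) p"
  by (induct p) auto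

lemma sound: "provH F \<Longrightarrow> pe (T D) F"
proof (induct rule: provH.induct)
  case (taut A)
  then obtain p \<sigma> where "ptaut p" "pinst \<sigma> p = A" unfolding taut_instance_def by blast
  then show ?case using pe_pinst unfolding ptaut_def by metis
next
  case (ax1 a b) then show ?case by (auto simp: T_def)
next
  case (ax2 a b c) then show ?case by (auto simp: T_def)
next
  case (ax3 a b) then show ?case by (auto simp: T_def)
next
  case (mp A B) then show ?case by simp
qed

definition closed :: "(name \<Rightarrow> name \<Rightarrow> bool) \<Rightarrow> bool" where
  "closed S \<longleftrightarrow> (\<forall>a b. S a b \<longrightarrow> S a a) \<and> (\<forall>a b c. S a b \<and> S b c \<longrightarrow> S a c)
     \<and> (\<forall>a b. S a b \<and> S b b \<longrightarrow> S b a)"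

definition cls :: "(name \<Rightarrow> name \<Rightarrow> bool) \<Rightarrow> name \<Rightarrow> name set" where
  "cls S a = {c. S c a \<and> S a c}"

definition RD :: "(name \<Rightarrow> name \<Rightarrow> bool) \<Rightarrow> name \<Rightarrow> (name set + name \<times> bool) set" where
  "RD S b = {Inl (cls S c) | c. S c b} \<union> (if S b b then {} else {Inr (b,True), Inr (b,False)})"

lemma realize: assumes "closed S" shows "T (RD S) a b = S a b"
proof
  assume "T (RD S) a b"
  then obtain x where x: "RD S a = {x}" "x \<in> RD S b" unfolding T_def by blast
  have saa: "S a a"
  proof (rule ccontr)
    assume "\<not> S a a"
    then have "Inr (a,True) \<in> RD S a" "Inr (a,False) \<in> RD S a" unfolding RD_def by auto
    with x show False by auto
  qed
  then have "Inl (cls S a) \<in> RD S a" unfolding RD_def by auto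
  with x have xe: "x = Inl (cls S a)" by auto
  with x obtain c where c: "cls S a = cls S c" "S c b" unfolding RD_def by (auto split: if_splits)
  have "a \<in> cls S a" using saa by (simp add: cls_def)
  then have "a \<in> cls S c" unfolding c(1)[symmetric] .
  then have "S a c" by (simp add: cls_def)
  then show "S a b" using c assms unfolding closed_def by blast
next
  assume sab: "S a b"
  have saa: "S a a" using sab assms unfolding closed_def by blast
  have "RD S a = {Inl (cls S a)}"
  proof -
    have "cls S c = cls S a" if "S c a" for c
    proof -
      have "S a c" using that saa assms unfolding closed_def by blast
      have tr: "\<And>x y z. S x y \<Longrightarrow> S y z \<Longrightarrow> S x z" using assms unfolding closed_def by blast
      show ?thesis unfolding cls_def
      proof (rule set_eqI, rule iffI)
        fix x assume "x \<in> {ca. S ca c \<and> S c ca}"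
        then show "x \<in> {c. S c a \<and> S a c}" using tr[of x c a] tr[of a c x] \<open>S a c\<close> \<open>S c a\<close> by simp
      next
        fix x assume "x \<in> {c. S c a \<and> S a c}"
        then show "x \<in> {ca. S ca c \<and> S c ca}" using tr[of x a c] tr[of c a x] \<open>S a c\<close> \<open>S c a\<close> by simp
      qed
    qed
    note eq = this
    have "{Inl (cls S c) |c. S c a} = {Inl (cls S a)}"
    proof (rule set_eqI, rule iffI)
      fix y assume "y \<in> {Inl (cls S c) |c. S c a}"
      then obtain c where "y = Inl (cls S c)" "S c a" by blast
      then show "y \<in> {Inl (cls S a)}" using eq by simp
    next
      fix y assume "y \<in> {Inl (cls S a)}"
      then show "y \<in> {Inl (cls S c) |c. S c a}" using saa by blast
    qed
    then show ?thesis using saa unfolding RD_def by simp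
  qed
  moreover have "Inl (cls S a) \<in> RD S b" using sab unfolding RD_def by auto
  ultimately show "T (RD S) a b" unfolding T_def by blast
qed



fun step :: "fm \<times> bool \<Rightarrow> nat \<Rightarrow> (fm \<times> bool) option" where
  "step (Or B C, b) i = (if i = 0 then Some (B,b) else if i = 1 then Some (C,b) else None)"
| "step (Neg B, b) i = (if i = 0 then Some (B, \<not> b) else None)"
| "step (Eps x y, b) i = None"

definition sub :: "fm \<Rightarrow> nat list \<Rightarrow> (fm \<times> bool) option" where
  "sub A p = fold (\<lambda>i acc. Option.bind acc (\<lambda>x. step x i)) p (Some (A,True))"

lemma sub_snoc: "sub A (p@[i]) = Option.bind (sub A p) (\<lambda>x. step x i)"
  by (simp add: sub_def)
lemma sub_Nil: "sub A [] = Some (A,True)" by (simp add: sub_def)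

lemma parts_sub: "pos_part H p B \<Longrightarrow> sub H p = Some (B,True)"
  "neg_part H p B \<Longrightarrow> sub H p = Some (B,False)"
  by (induct rule: pos_part_neg_part.inducts) (simp_all add: sub_snoc sub_Nil)

lemma step_size: "step (F,b) i = Some (G,c) \<Longrightarrow> size G < size F"
  by (cases F) (auto split: if_splits)

lemma sub_ext: "sub H p = Some (B,b) \<Longrightarrow> sub H (p@r) = Some (B',b') \<Longrightarrow> r \<noteq> [] \<Longrightarrow> size B' < size B"
proof (induct r arbitrary: B' b' rule: rev_induct)
  case Nil then show ?case by simp
next
  case (snoc i r)
  have "sub H (p@r@[i]) = Option.bind (sub H (p@r)) (\<lambda>x. step x i)"
    using sub_snoc[of H "p@r" i] by simp
  with snoc.prems obtain G c where G: "sub H (p@r) = Some (G,c)" "step (G,c) i = Some (B',b')"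
    by (cases "sub H (p@r)") auto
  have "size B' < size G" using step_size[OF G(2)] .
  show ?case
  proof (cases "r = []")
    case True then show ?thesis using G snoc.prems by simp (metis \<open>size B' < size G\<close> fst_conv option.inject)
  next
    case False then show ?thesis using snoc.hyps[OF snoc.prems(1) G(1)] \<open>size B' < size G\<close> by simp
  qed
qed

lemma no_overlap: "pos_part H p B \<Longrightarrow> neg_part H q B \<Longrightarrow> (\<exists>r. q = p@r) \<or> (\<exists>r. p = q@r) \<Longrightarrow> False"
proof -
  assume a: "pos_part H p B" "neg_part H q B" and o: "(\<exists>r. q = p@r) \<or> (\<exists>r. p = q@r)"
  have s1: "sub H p = Some (B,True)" and s2: "sub H q = Some (B,False)" using a parts_sub by auto
  from o show False
  proof
    assume "\<exists>r. q = p@r"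
    then obtain r where r: "q = p@r" by blast
    show False
    proof (cases "r = []")
      case True then show ?thesis using s1 s2 r by simp
    next
      case False then show ?thesis using sub_ext[OF s1 _ False, of B False] s2 r by simp
    qed
  next
    assume "\<exists>r. p = q@r"
    then obtain r where r: "p = q@r" by blast
    show False
    proof (cases "r = []")
      case True then show ?thesis using s1 s2 r by simp
    next
      case False then show ?thesis using sub_ext[OF s2 _ False, of B True] s1 r by simp
    qed
  qed
qed

definition NS :: "fm \<Rightarrow> name \<Rightarrow> name \<Rightarrow> bool" where
  "NS H a b \<longleftrightarrow> is_neg_part H (Eps a b)"

lemma hint_closed: "hintikka H \<Longrightarrow> closed (NS H)"
  unfolding hintikka_def closed_def NS_def by blast

lemma hint_parts:
  assumes h: "hintikka H"
  shows "\<forall>p. (pos_part H p B \<longrightarrow> \<not> pe (NS H) B) \<and> (neg_part H p B \<longrightarrow> pe (NS H) B)"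
proof (induct B)
  case (Eps a b)
  show ?case
  proof (intro allI conjI impI)
    fix p assume pp: "pos_part H p (Eps a b)"
    show "\<not> pe (NS H) (Eps a b)"
    proof
      assume "pe (NS H) (Eps a b)"
      then obtain q where q: "neg_part H q (Eps a b)" by (auto simp: NS_def is_neg_part_def)
      have "\<not> has_pos_neg H" using h unfolding hintikka_def by blast
      then have "(\<exists>r. q = p@r) \<or> (\<exists>r. p = q@r)" using pp q unfolding has_pos_neg_def by blast
      then show False using no_overlap[OF pp q] by blast
    qed
  next
    fix p assume "neg_part H p (Eps a b)"
    then show "pe (NS H) (Eps a b)" by (auto simp: NS_def is_neg_part_def)
  qed
next
  case (Or B C)
  show ?case
  proof (intro allI conjI impI)
    fix p assume "pos_part H p (Or B C)"
    then have "pos_part H (p@[0]) B" "pos_part H (p@[1]) C"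
      by (blast intro: pos_part_neg_part.pos_orL pos_part_neg_part.pos_orR)+
    then show "\<not> pe (NS H) (Or B C)" using Or by auto
  next
    fix p assume "neg_part H p (Or B C)"
    then have "is_neg_part H (Or B C)" by (auto simp: is_neg_part_def)
    then have "is_neg_part H B \<or> is_neg_part H C" using h unfolding hintikka_def by blast
    then show "pe (NS H) (Or B C)" using Or unfolding is_neg_part_def by auto
  qed
next
  case (Neg B)
  show ?case
  proof (intro allI conjI impI)
    fix p assume "pos_part H p (Neg B)"
    then have "neg_part H (p@[0]) B" by (auto intro: pos_part_neg_part.intros)
    then show "\<not> pe (NS H) (Neg B)" using Neg by auto
  next
    fix p assume "neg_part H p (Neg B)"
    then have "pos_part H (p@[0]) B" by (auto intro: pos_part_neg_part.intros)
    then show "pe (NS H) (Neg B)" using Neg by auto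
  qed
qed

lemma hint_model: "hintikka H \<Longrightarrow> \<not> pe (T (RD (NS H))) H \<and> T (RD (NS H)) = NS H"
proof -
  assume h: "hintikka H"
  have e: "T (RD (NS H)) = NS H" using realize[OF hint_closed[OF h]] by (intro ext) simp
  have "\<not> pe (NS H) H" using hint_parts[OF h, of H] pos_part_neg_part.pos_self by blast
  then show ?thesis using e by simp
qed

type_synonym obj = "name set + name \<times> bool"

lemma hl1_sound: "provHL1 A \<Longrightarrow> \<exists>D::name \<Rightarrow> obj set. \<not> pe (T D) A"
proof (induct rule: provHL1.induct)
  case (hl_hint A) then show ?case using hint_model by blast
next
  case (hl_mp A B) then show ?case using sound[of "Imp A B"] by force
qed

lemma pe_nsubst: "pe w (nsubst s B) = pe (\<lambda>a b. w (s a) (s b)) B"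
  by (induct B) auto

lemma T_comp: "T (D \<circ> s) = (\<lambda>a b. T D (s a) (s b))"
  by (auto simp: T_def fun_eq_iff)

lemma refH_sound: "refH a0 A \<Longrightarrow> \<exists>D::name \<Rightarrow> obj set. \<not> pe (T D) A"
proof (induct rule: refH.induct)
  case r_atom
  have "\<not> pe (T (\<lambda>_. {}::obj set)) (Eps a0 a0)" by (simp add: T_def)
  then show ?case by blast
next
  case r_negatom
  have "\<not> pe (T (\<lambda>_. {Inl {}}::obj set)) (Neg (Eps a0 a0))" by (simp add: T_def)
  then show ?case by blast
next
  case (r_mp A B) then show ?case using sound[of "Imp A B"] by force
next
  case (r_subst A s B)
  then obtain D :: "name \<Rightarrow> obj set" where "\<not> pe (T D) (nsubst s B)" by blast
  then have "\<not> pe (T (D \<circ> s)) B" by (simp add: pe_nsubst T_comp)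
  then show ?case by blast
next
  case (r_ext A a b)
  have m1: "\<not> pe (T (RD (NS A))) A" and m2: "T (RD (NS A)) = NS A"
    using hint_model[OF r_ext(1)] by auto
  have "\<not> T (RD (NS A)) a b" unfolding m2 using r_ext(5) by (simp add: NS_def)
  then have "\<not> pe (T (RD (NS A))) (Or A (Eps a b))" using m1 by simp
  then show ?case by blast
qed

lemma notprov: "provHL1 A \<Longrightarrow> \<not> provH A" "refH a0 A \<Longrightarrow> \<not> provH A"
  using hl1_sound refH_sound sound by blast+



lemma pos_orR': "pos_part A p (Or B C) \<Longrightarrow> pos_part A (p @ [Suc 0]) C"
  using pos_part_neg_part.pos_orR by simp

lemma inv_Or: "pos_part (Or A B) p F \<Longrightarrow> (p = [] \<and> F = Or A B) \<or> (\<exists>q. p = 0#q \<and> pos_part A q F) \<or> (\<exists>q. p = 1#q \<and> pos_part B q F)"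
  "neg_part (Or A B) p F \<Longrightarrow> (\<exists>q. p = 0#q \<and> neg_part A q F) \<or> (\<exists>q. p = 1#q \<and> neg_part B q F)"
proof (induct rule: pos_part_neg_part.inducts)
  case pos_self then show ?case by simp
next
  case (pos_orL p B' C) then show ?case
    by (auto intro: pos_part_neg_part.intros) 
next
  case (pos_orR p B' C) then show ?case
    by (auto intro: pos_part_neg_part.intros pos_orR') 
next
  case (pos_neg p B') then show ?case
    by (auto intro: pos_part_neg_part.intros)
next
  case (neg_neg p B') then show ?case
    by (auto intro: pos_part_neg_part.intros)
qed

lemma inv_Neg: "pos_part (Neg (Eps a b)) p F \<Longrightarrow> (p = [] \<and> F = Neg (Eps a b))"
  "neg_part (Neg (Eps a b)) p F \<Longrightarrow> p = [0] \<and> F = Eps a b"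
  by (induct rule: pos_part_neg_part.inducts) auto

lemma inv_Eps: "pos_part (Eps a b) p F \<Longrightarrow> (p = [] \<and> F = Eps a b)"
  "neg_part (Eps a b) p F \<Longrightarrow> False"
  by (induct rule: pos_part_neg_part.inducts) auto

lemma shift: "pos_part A q F \<Longrightarrow> pos_part (Or A B) (0#q) F \<and> pos_part (Or B A) (1#q) F"
  "neg_part A q F \<Longrightarrow> neg_part (Or A B) (0#q) F \<and> neg_part (Or B A) (1#q) F"
proof (induct rule: pos_part_neg_part.inducts)
  case pos_self
  have "pos_part (Or A B) ([]@[0]) A" "pos_part (Or B A) ([]@[1]) A"
    by (rule pos_part_neg_part.intros pos_part_neg_part.pos_self)+
  then show ?case by simp
next
  case (pos_orL p B' C)
  then show ?case using pos_part_neg_part.pos_orL[of "Or A B" "0#p" B' C] pos_part_neg_part.pos_orL[of "Or B A" "1#p" B' C] by simp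
next
  case (pos_orR p B' C)
  then show ?case using pos_part_neg_part.pos_orR[of "Or A B" "0#p" B' C] pos_part_neg_part.pos_orR[of "Or B A" "1#p" B' C] by simp
next
  case (pos_neg p B')
  then show ?case using pos_part_neg_part.pos_neg[of "Or A B" "0#p" B'] pos_part_neg_part.pos_neg[of "Or B A" "1#p" B'] by simp
next
  case (neg_neg p B')
  then show ?case using pos_part_neg_part.neg_neg[of "Or A B" "0#p" B'] pos_part_neg_part.neg_neg[of "Or B A" "1#p" B'] by simp
qed

fun lits :: "fm \<Rightarrow> fm set" where
  "lits (Or A B) = lits A \<union> lits B"
| "lits (Eps a b) = {Eps a b}"
| "lits (Neg A) = {Neg A}"

lemma ld_neg: "lit_disj X \<Longrightarrow> neg_part X p F \<Longrightarrow> \<exists>a b. F = Eps a b \<and> Neg (Eps a b) \<in> lits X"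
proof (induct X arbitrary: p rule: lit_disj.induct)
  case (1 a b) then show ?case using inv_Eps by blast
next
  case (2 a b) then show ?case using inv_Neg(2) by fastforce
next
  case (3 A B) then show ?case using inv_Or(2) by fastforce
qed

lemma ld_pos: "lit_disj X \<Longrightarrow> pos_part X p (Eps a b) \<Longrightarrow> Eps a b \<in> lits X"
proof (induct X arbitrary: p rule: lit_disj.induct)
  case (1 a b) then show ?case using inv_Eps by auto
next
  case (2 a b) then show ?case using inv_Neg(1) by fastforce
next
  case (3 A B) then show ?case using inv_Or(1)[of A B p "Eps a b"] by auto
qed

lemma ld_negpart: "lit_disj X \<Longrightarrow> Neg (Eps a b) \<in> lits X \<Longrightarrow> is_neg_part X (Eps a b)"
proof (induct X rule: lit_disj.induct)
  case (1 a b) then show ?case by simp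
next
  case (2 c d)
  have "neg_part (Neg (Eps c d)) ([]@[0]) (Eps c d)"
    by (rule pos_part_neg_part.pos_neg pos_part_neg_part.pos_self)+
  then show ?case using 2 by (auto simp: is_neg_part_def)
next
  case (3 A B) then show ?case using shift(2) unfolding is_neg_part_def by auto blast+
qed

lemma ld_isneg: "lit_disj X \<Longrightarrow> is_neg_part X F \<longleftrightarrow> (\<exists>a b. F = Eps a b \<and> Neg (Eps a b) \<in> lits X)"
  using ld_neg ld_negpart unfolding is_neg_part_def by blast

definition negat :: "fm \<Rightarrow> name \<Rightarrow> name \<Rightarrow> bool" where
  "negat X a b \<longleftrightarrow> Neg (Eps a b) \<in> lits X"

definition good :: "fm \<Rightarrow> bool" where
  "good X \<longleftrightarrow> lit_disj X \<and> closed (negat X) \<and> (\<forall>a b. Neg (Eps a b) \<in> lits X \<longrightarrow> Eps a b \<notin> lits X)"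

lemma good_hint: assumes "good X" shows "hintikka X"
proof -
  have ld: "lit_disj X" and cl: "closed (negat X)" and cons: "\<forall>a b. Neg (Eps a b) \<in> lits X \<longrightarrow> Eps a b \<notin> lits X"
    using assms unfolding good_def by auto
  have isn: "\<And>F. is_neg_part X F \<longleftrightarrow> (\<exists>a b. F = Eps a b \<and> negat X a b)"
    using ld_isneg[OF ld] unfolding negat_def by blast
  have "\<not> has_pos_neg X"
  proof
    assume "has_pos_neg X"
    then obtain B p q where pq: "pos_part X p B" "neg_part X q B" unfolding has_pos_neg_def by blast
    then obtain a b where "B = Eps a b" "Neg (Eps a b) \<in> lits X" using ld_neg[OF ld] by blast
    moreover have "Eps a b \<in> lits X" using ld_pos[OF ld] pq calculation by blast
    ultimately show False using cons by blast
  qed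
  then show ?thesis unfolding hintikka_def isn using cl unfolding closed_def by blast
qed



lemma lits_foldl: "lits (foldl Or X xs) = lits X \<union> (\<Union>x\<in>set xs. lits x)"
  by (induct xs arbitrary: X) auto

lemma lit_disj_foldl: "lit_disj X \<Longrightarrow> \<forall>x\<in>set xs. lit_disj x \<Longrightarrow> lit_disj (foldl Or X xs)"
  by (induct xs arbitrary: X) (auto intro: lit_disj.intros)

lemma pe_lits: "pe w X \<longleftrightarrow> (\<exists>l\<in>lits X. pe w l)"
  by (induct X) auto

lemma build: "refH a0 X \<Longrightarrow> good X \<Longrightarrow> \<forall>x\<in>set xs. \<exists>a b. x = Eps a b \<and> \<not> negat X a b \<Longrightarrow>
  refH a0 (foldl Or X xs) \<and> good (foldl Or X xs) \<and> lits (foldl Or X xs) = lits X \<union> set xs"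
proof (induct xs arbitrary: X)
  case Nil then show ?case by simp
next
  case (Cons x xs)
  then obtain a b where x: "x = Eps a b" "\<not> negat X a b" by auto
  have ld: "lit_disj X" using Cons.prems unfolding good_def by blast
  have "\<not> is_neg_part X (Eps a b)" using ld_isneg[OF ld] x(2) unfolding negat_def by blast
  then have r: "refH a0 (Or X x)" using refH.r_ext[OF good_hint[OF Cons.prems(2)] ld Cons.prems(1)] x(1) by simp
  have ng: "negat (Or X x) = negat X" using x unfolding negat_def by (auto simp: fun_eq_iff)
  have g: "good (Or X x)" using Cons.prems(2) x unfolding good_def ng
    by (auto intro: lit_disj.intros simp: negat_def)
  have "\<forall>y\<in>set xs. \<exists>a b. y = Eps a b \<and> \<not> negat (Or X x) a b" using Cons.prems(3) ng by simp
  from Cons.hyps[OF r g this] show ?case using x by auto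
qed

fun names :: "fm \<Rightarrow> name list" where
  "names (Eps a b) = [a,b]"
| "names (Or A B) = names A @ names B"
| "names (Neg A) = names A"

lemma names_ne: "names F \<noteq> []" by (induct F) auto

lemma pe_cong: "(\<And>a b. a \<in> set (names F) \<Longrightarrow> b \<in> set (names F) \<Longrightarrow> w a b = w' a b) \<Longrightarrow> pe w F = pe w' F"
  by (induct F) auto

lemma compl: assumes "\<not> provH A" shows "\<exists>H. hintikka H \<and> provH (Imp A H) \<and> refH a0 H"
proof -
  define ns where "ns = names A"
  define Gs where "Gs = [Imp (Eps a b) (Eps a a). a \<leftarrow> ns, b \<leftarrow> ns]
     @ [Imp (And (Eps a b) (Eps b c)) (Eps a c). a \<leftarrow> ns, b \<leftarrow> ns, c \<leftarrow> ns]
     @ [Imp (And (Eps a b) (Eps b b)) (Eps b a). a \<leftarrow> ns, b \<leftarrow> ns]"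
  have "\<forall>G\<in>set Gs. provH G" unfolding Gs_def by (auto intro: provH.intros)
  then obtain w where wG: "\<forall>G\<in>set Gs. pe w G" and wA: "\<not> pe w A"
    using semconseq[of Gs A] assms by blast
  define S where "S = (\<lambda>a b. a \<in> set ns \<and> b \<in> set ns \<and> w a b)"
  have m1: "\<And>a b. a \<in> set ns \<Longrightarrow> b \<in> set ns \<Longrightarrow> Imp (Eps a b) (Eps a a) \<in> set Gs"
    unfolding Gs_def by auto
  have m2: "\<And>a b c. a \<in> set ns \<Longrightarrow> b \<in> set ns \<Longrightarrow> c \<in> set ns \<Longrightarrow> Imp (And (Eps a b) (Eps b c)) (Eps a c) \<in> set Gs"
    unfolding Gs_def by auto
  have m3: "\<And>a b. a \<in> set ns \<Longrightarrow> b \<in> set ns \<Longrightarrow> Imp (And (Eps a b) (Eps b b)) (Eps b a) \<in> set Gs"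
    unfolding Gs_def by auto
  have g1: "w a a" if "a \<in> set ns" "b \<in> set ns" "w a b" for a b
    using bspec[OF wG m1[OF that(1,2)]] that(3) by simp
  have g2: "w a c" if "a \<in> set ns" "b \<in> set ns" "c \<in> set ns" "w a b" "w b c" for a b c
    using bspec[OF wG m2[OF that(1,2,3)]] that(4,5) by simp
  have g3: "w b a" if "a \<in> set ns" "b \<in> set ns" "w a b" "w b b" for a b
    using bspec[OF wG m3[OF that(1,2)]] that(3,4) by simp
  have clS: "closed S" unfolding closed_def S_def using g1 g2 g3 by blast
  have SA: "\<not> pe S A" using wA pe_cong[of A S w] unfolding S_def ns_def by auto
  define negs where "negs = [Neg (Eps a b). a \<leftarrow> ns, b \<leftarrow> ns, S a b]"
  define poss where "poss = [Eps a b. a \<leftarrow> ns, b \<leftarrow> ns, \<not> S a b]"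
  have negs_iff: "\<And>l. l \<in> set negs \<longleftrightarrow> (\<exists>a b. l = Neg (Eps a b) \<and> S a b)"
    unfolding negs_def S_def by auto
  have poss_iff: "\<And>l. l \<in> set poss \<longleftrightarrow> (\<exists>a b. l = Eps a b \<and> a \<in> set ns \<and> b \<in> set ns \<and> \<not> S a b)"
    unfolding poss_def by auto
  have "ns \<noteq> []" unfolding ns_def by (rule names_ne)
  then obtain a1 where a1: "a1 \<in> set ns" by (cases ns) auto
  have "\<exists>H. refH a0 H \<and> good H \<and> lits H = set negs \<union> set poss"
  proof (cases negs)
    case Nil
    have "\<not> S a1 a1" using negs_iff[of "Neg (Eps a1 a1)"] Nil by simp
    then have "Eps a1 a1 \<in> set poss" using poss_iff[of "Eps a1 a1"] a1 by simp
    then obtain x xs where pc: "poss = x # xs" by (cases poss) auto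
    then have "x \<in> set poss" by simp
    then obtain c d where x: "x = Eps c d" using poss_iff[of x] by blast
    have r0: "refH a0 x" using refH.r_subst[OF refH.r_atom, where B="Eps c d" and s="\<lambda>_. a0"] x by simp
    have nx: "negat x = (\<lambda>_ _. False)" using x by (auto simp: negat_def fun_eq_iff)
    have g0: "good x" unfolding good_def nx closed_def using x by (auto intro: lit_disj.intros)
    have "\<forall>y\<in>set poss. \<exists>a b. y = Eps a b \<and> \<not> negat x a b" unfolding nx
      using poss_iff by blast
    then have "\<forall>y\<in>set xs. \<exists>a b. y = Eps a b \<and> \<not> negat x a b" using pc by simp
    from build[OF r0 g0 this] have "refH a0 (foldl Or x xs) \<and> good (foldl Or x xs) \<and> lits (foldl Or x xs) = set negs \<union> set poss"
      using pc Nil x by simp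
    then show ?thesis by blast
  next
    case (Cons n ns')
    define X0 where "X0 = foldl Or n ns'"
    have lit1: "lits l = {l} \<and> lit_disj l" if lin: "l \<in> set negs" for l
    proof -
      obtain a b where "l = Neg (Eps a b)" using negs_iff[of l] lin by blast
      then show ?thesis by (auto intro: lit_disj.intros)
    qed
    have ln: "lits n = {n}" "lit_disj n" using lit1[of n] Cons by auto
    have lns: "\<forall>l\<in>set ns'. lits l = {l} \<and> lit_disj l" using lit1 Cons by simp
    have "(\<Union>x\<in>set ns'. lits x) = set ns'" using lns by auto
    then have lX0: "lits X0 = set negs" unfolding X0_def lits_foldl using ln Cons by simp
    have ldX0: "lit_disj X0" unfolding X0_def using lit_disj_foldl[OF ln(2)] lns by blast
    have nX0: "negat X0 = S" unfolding negat_def lX0 fun_eq_iff using negs_iff by blast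
    have cons: "\<forall>a b. Neg (Eps a b) \<in> lits X0 \<longrightarrow> Eps a b \<notin> lits X0"
      unfolding lX0 using negs_iff by blast
    have gX0: "good X0" unfolding good_def nX0 using ldX0 clS cons by blast
    have "provH (Imp (nsubst (\<lambda>_. a0) X0) (Neg (Eps a0 a0)))"
    proof (rule taut_prov)
      fix w'
      have "pe w' (nsubst (\<lambda>_. a0) X0) \<Longrightarrow> \<not> w' a0 a0"
      proof -
        assume "pe w' (nsubst (\<lambda>_. a0) X0)"
        then have "\<exists>l\<in>set negs. pe (\<lambda>a b. w' a0 a0) l" unfolding pe_nsubst pe_lits[of _ X0] lX0 .
        then obtain l where "l \<in> set negs" "pe (\<lambda>a b. w' a0 a0) l" by blast
        then obtain a b where "l = Neg (Eps a b)" "pe (\<lambda>a b. w' a0 a0) l" using negs_iff[of l] by blast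
        then show ?thesis by simp
      qed
      then show "pe w' (Imp (nsubst (\<lambda>_. a0) X0) (Neg (Eps a0 a0)))" by simp
    qed
    from refH.r_mp[OF this refH.r_negatom] have r0: "refH a0 X0"
      by (rule refH.r_subst) simp
    have "\<forall>y\<in>set poss. \<exists>a b. y = Eps a b \<and> \<not> negat X0 a b" unfolding nX0 using poss_iff by blast
    from build[OF r0 gX0 this] have "refH a0 (foldl Or X0 poss) \<and> good (foldl Or X0 poss) \<and> lits (foldl Or X0 poss) = set negs \<union> set poss"
      using lX0 by simp
    then show ?thesis by blast
  qed
  then obtain H where H: "refH a0 H" "good H" "lits H = set negs \<union> set poss" by blast
  have "provH (Imp A H)"
  proof (rule taut_prov)
    fix w'
    show "pe w' (Imp A H)"
    proof (cases "pe w' H")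
      case False
      then have nl: "\<forall>l\<in>lits H. \<not> pe w' l" using pe_lits by blast
      have "\<And>a b. a \<in> set ns \<Longrightarrow> b \<in> set ns \<Longrightarrow> w' a b = S a b"
      proof -
        fix a b assume ab: "a \<in> set ns" "b \<in> set ns"
        show "w' a b = S a b"
        proof (cases "S a b")
          case True
          then have "Neg (Eps a b) \<in> lits H" using H(3) negs_iff by auto
          then show ?thesis using nl True by fastforce
        next
          case False
          then have "Eps a b \<in> lits H" using H(3) poss_iff ab by auto
          then show ?thesis using nl False by fastforce
        qed
      qed
      then have "pe w' A = pe S A" using pe_cong[of A w' S] unfolding ns_def by blast
      then show ?thesis using SA by simp
    qed simp
  qed
  then show ?thesis using H good_hint by blast
qed

theorem theorem9p3:
  fixes a0 :: name and A :: fm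
  shows "provHL1 A \<longleftrightarrow> refH a0 A"
proof
  assume "provHL1 A"
  then have "\<not> provH A" by (rule notprov)
  from compl[OF this, of a0] show "refH a0 A" using refH.r_mp by blast
next
  assume "refH a0 A"
  then have "\<not> provH A" by (rule notprov)
  from compl[OF this, of a0] show "provHL1 A" using provHL1.intros by blast
qed

end
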